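(* Let $n>0$ and $c>0$ be constants and fix $x_0$ with $0<x_0<c$. Let $f\in C(\mathbb{R}_0^+\times\mathbb{R}_0^+,\mathbb{R}_0^+)$ be nondecreasing in its first variable for each fixed second variable, let $w\in C(\mathbb{R}_0^+,\mathbb{R}_0^+)$ be nondecreasing with $w(x)>0$ for $x>0$, and let $\alpha\in C^1(\mathbb{R}_0^+,\mathbb{R}_0^+)$ be nondecreasing with $\alpha(t)\le t$. If $u\in C(\mathbb{R}_0^+,\mathbb{R}_0^+)$ satisfies $$u^n(t)\le c+\int_0^{\alpha(t)}f(t,s)\,(u^n(s)+1)\ln(u^n(s)+1)\,w(u(s))\,ds\qquad\text{for all }t\ge0,$$ then there exists $\tau>0$ such that for all $t\in[0,\tau]$, $$\Psi(G(c))+\int_0^{\alpha(t)}f(t,s)\,ds\in\mathrm{Dom}(\Psi^{-1})$$ and $$u(t)\le\Big\{G^{-1}\Big(\Psi^{-1}\Big[\Psi(G(c))+\int_0^{\alpha(t)}f(t,s)\,ds\Big]\Big)\Big\}^{1/n},$$ where $G(x)=\int_{x_0}^x\frac{ds}{(s+1)\ln(s+1)}$ for $x\ge x_0$, whose inverse is $G^{-1}(y)=e^{e^{y}\ln(x_0+1)}-1$, and $\Psi(x)=\int_1^x\frac{ds}{w\big((e^{e^{s}\ln(x_0+1)}-1)^{1/n}\big)}$ for $x>0$.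
   Context: $\mathbb{R}_0^+=[0,\infty)$. $\Psi$ is strictly increasing on $(0,\infty)$, $\Psi^{-1}$ denotes its inverse, and $\mathrm{Dom}(\Psi^{-1})=\Psi((0,\infty))$. *)

theory Defs
  imports "HOL-Analysis.Analysis"
begin

definition oint :: "(real \<Rightarrow> real) \<Rightarrow> real \<Rightarrow> real \<Rightarrow> real" where
  "oint g a b = (if a \<le> b then integral {a..b} g else - integral {b..a} g)"

definition G :: "real \<Rightarrow> real \<Rightarrow> real" where
  "G x0 x = oint (\<lambda>s. 1 / ((s + 1) * ln (s + 1))) x0 x"

definition Ginv :: "real \<Rightarrow> real \<Rightarrow> real" where
  "Ginv x0 y = exp (exp y * ln (x0 + 1)) - 1"

definition Psi :: "real \<Rightarrow> (real \<Rightarrow> real) \<Rightarrow> real \<Rightarrow> real \<Rightarrow> real" where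
  "Psi n w x0 x = oint (\<lambda>s. 1 / w ((exp (exp s * ln (x0 + 1)) - 1) powr (1 / n))) 1 x"

definition Psi_inv :: "real \<Rightarrow> (real \<Rightarrow> real) \<Rightarrow> real \<Rightarrow> real \<Rightarrow> real" where
  "Psi_inv n w x0 = the_inv_into {0<..} (Psi n w x0)"

end

theory Submission
  imports Defs
begin


definition hP :: "real \<Rightarrow> (real \<Rightarrow> real) \<Rightarrow> real \<Rightarrow> real \<Rightarrow> real" where
  "hP n w x0 s = 1 / w ((exp (exp s * ln (x0 + 1)) - 1) powr (1 / n))"

lemma hP_pos:
  assumes "x0 > 0" "\<And>x. x > 0 \<Longrightarrow> w x > 0"
  shows "hP n w x0 s > 0"
proof -
  have "ln (x0+1) > 0" using assms by simp
  hence "exp s * ln (x0 + 1) > 0" by simp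
  hence "exp (exp s * ln (x0 + 1)) > 1" by (rule exp_gt_one)
  hence e: "exp (exp s * ln (x0 + 1)) - 1 > 0" by simp
  have "(exp (exp s * ln (x0 + 1)) - 1) powr (1 / n) > 0" using e by (simp only: powr_gt_zero)
  thus ?thesis unfolding hP_def using assms by simp
qed

lemma hP_cont:
  assumes "x0 > 0" "\<And>x. x > 0 \<Longrightarrow> w x > 0" "continuous_on {0..} w"
  shows "continuous_on S (hP n w x0)"
proof -
  have L: "ln (x0+1) > 0" using assms by simp
  have pos: "exp (exp s * ln (x0 + 1)) - 1 > 0" for s
    using L by simp
  have c1: "continuous_on S (\<lambda>s. (exp (exp s * ln (x0 + 1)) - 1) powr (1 / n))"
    using pos by (intro continuous_intros) auto
  have c2: "continuous_on S (\<lambda>s. w ((exp (exp s * ln (x0 + 1)) - 1) powr (1 / n)))"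
    by (rule continuous_on_compose2[OF assms(3) c1]) auto
  have wne: "w ((exp (exp s * ln (x0 + 1)) - 1) powr (1 / n)) \<noteq> 0" for s
  proof -
    have "(exp (exp s * ln (x0 + 1)) - 1) powr (1 / n) > 0" using pos[of s] by (simp only: powr_gt_zero)
    thus ?thesis using assms(2) by (metis less_irrefl)
  qed
  show ?thesis unfolding hP_def
    using c2 wne
    by (intro continuous_intros) auto
qed

lemma Psi_eq:
  assumes "x0 > 0" "\<And>x. x > 0 \<Longrightarrow> w x > 0" "continuous_on {0..} w" "x > 0"
  shows "Psi n w x0 x = integral {0..x} (hP n w x0) - integral {0..1} (hP n w x0)"
proof -
  have int: "hP n w x0 integrable_on {a..b}" for a b
    by (rule integrable_continuous_interval, rule hP_cont[OF assms(1-3)])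
  show ?thesis
  proof (cases "1 \<le> x")
    case True
    have "integral {0..1} (hP n w x0) + integral {1..x} (hP n w x0) = integral {0..x} (hP n w x0)"
      by (rule Henstock_Kurzweil_Integration.integral_combine) (use True int in auto)
    then show ?thesis using True unfolding Psi_def oint_def hP_def by simp
  next
    case False
    have "integral {0..x} (hP n w x0) + integral {x..1} (hP n w x0) = integral {0..1} (hP n w x0)"
      by (rule Henstock_Kurzweil_Integration.integral_combine) (use False assms(4) int in auto)
    then show ?thesis using False unfolding Psi_def oint_def hP_def by simp
  qed
qed

lemma Psi_deriv:
  assumes "x0 > 0" "\<And>x. x > 0 \<Longrightarrow> w x > 0" "continuous_on {0..} w" "x > 0"
  shows "DERIV (Psi n w x0) x :> hP n w x0 x"
proof -
  have "((\<lambda>y. integral {0..y} (hP n w x0)) has_real_derivative hP n w x0 x) (at x within {0..x+1})"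
    by (rule integral_has_real_derivative) (use hP_cont[OF assms(1-3)] assms(4) in auto)
  moreover have "at x within {0..x+1} = at x"
    by (rule at_within_interior) (use assms(4) in simp)
  ultimately have "((\<lambda>y. integral {0..y} (hP n w x0)) has_real_derivative hP n w x0 x) (at x)" by simp
  hence "((\<lambda>y. integral {0..y} (hP n w x0) - integral {0..1} (hP n w x0)) has_real_derivative hP n w x0 x) (at x)"
    by (auto intro!: derivative_eq_intros)
  thus ?thesis
    by (rule has_field_derivative_transform_within_open[where S="{0<..}"])
       (use assms Psi_eq[OF assms(1-3)] in auto)
qed

lemma Psi_strict:
  assumes "x0 > 0" "\<And>x. x > 0 \<Longrightarrow> w x > 0" "continuous_on {0..} w" "0 < a" "a < b"
  shows "Psi n w x0 a < Psi n w x0 b"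
proof (rule DERIV_pos_imp_increasing[OF assms(5)])
  fix x assume "a \<le> x" "x \<le> b"
  hence "x > 0" using assms(4) by simp
  have "DERIV (Psi n w x0) x :> hP n w x0 x" by (rule Psi_deriv[OF assms(1-3) \<open>x > 0\<close>])
  moreover have "hP n w x0 x > 0" by (rule hP_pos[OF assms(1,2)])
  ultimately show "\<exists>y. DERIV (Psi n w x0) x :> y \<and> y > 0" by blast
qed

lemma Psi_cont:
  assumes "x0 > 0" "\<And>x. x > 0 \<Longrightarrow> w x > 0" "continuous_on {0..} w" "0 < a"
  shows "continuous_on {a..b} (Psi n w x0)"
  by (rule DERIV_continuous_on, rule has_field_derivative_at_within, rule Psi_deriv)
     (use assms in auto)

definition Gc :: "real \<Rightarrow> real \<Rightarrow> real" where
  "Gc x0 y = ln (ln (y+1)) - ln (ln (x0+1))"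

lemma G_eq:
  assumes "0 < x0" "x0 \<le> c"
  shows "G x0 c = Gc x0 c"
proof -
  have "((\<lambda>s. 1 / ((s + 1) * ln (s + 1))) has_integral (ln (ln (c+1)) - ln (ln (x0+1)))) {x0..c}"
  proof (rule fundamental_theorem_of_calculus[OF assms(2)])
    fix x assume x: "x \<in> {x0..c}"
    hence "x > 0" using assms by auto
    hence "((\<lambda>s. ln (ln (s+1))) has_real_derivative 1 / ((x + 1) * ln (x + 1))) (at x)"
      by (auto intro!: derivative_eq_intros simp: field_simps)
    thus "((\<lambda>s. ln (ln (s+1))) has_vector_derivative 1 / ((x + 1) * ln (x + 1))) (at x within {x0..c})"
      by (simp add: has_real_derivative_iff_has_vector_derivative has_vector_derivative_at_within)
  qed
  thus ?thesis unfolding G_def Gc_def oint_def using assms by (simp add: integral_unique)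
qed

lemma Ginv_Gc:
  assumes "0 < x0" "z > 0"
  shows "Ginv x0 (Gc x0 z) = z"
proof -
  have "ln (z+1) > 0" "ln (x0+1) > 0" using assms by auto
  hence "exp (Gc x0 z) = ln (z+1) / ln (x0+1)" unfolding Gc_def by (simp add: exp_diff)
  thus ?thesis unfolding Ginv_def using \<open>ln (x0+1) > 0\<close> assms by simp
qed


lemma Gc_pos:
  assumes "0 < x0" "x0 < z"
  shows "Gc x0 z > 0"
proof -
  have "ln (x0+1) > 0" using assms by simp
  moreover have "ln (x0+1) < ln (z+1)" using assms by simp
  ultimately show ?thesis unfolding Gc_def by simp
qed

lemma Ginv_mono:
  assumes "0 < x0" "a \<le> b"
  shows "Ginv x0 a \<le> Ginv x0 b"
proof -
  have "ln (x0+1) > 0" using assms by simp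
  thus ?thesis unfolding Ginv_def using assms by (simp add: mult_right_mono)
qed

lemma dGc:
  assumes "y > 0"
  shows "DERIV (Gc x0) y :> 1 / ((y+1) * ln (y+1))"
  unfolding Gc_def using assms
  by (auto intro!: derivative_eq_intros simp: field_simps)

lemma hP_Gc:
  assumes "0 < x0" "z > 0"
  shows "hP n w x0 (Gc x0 z) = 1 / w (z powr (1/n))"
  using Ginv_Gc[OF assms] unfolding hP_def Ginv_def by simp



theorem corollary2:
  fixes n c x0 :: real
    and f :: "real \<Rightarrow> real \<Rightarrow> real"
    and w \<alpha> u :: "real \<Rightarrow> real"
  assumes n_pos: "n > 0" and c_pos: "c > 0"
    and x0: "0 < x0" "x0 < c"
    and f_cont: "continuous_on ({0..} \<times> {0..}) (\<lambda>(t, s). f t s)"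
    and f_nonneg: "\<And>t s. t \<ge> 0 \<Longrightarrow> s \<ge> 0 \<Longrightarrow> f t s \<ge> 0"
    and f_mono: "\<And>s t1 t2. s \<ge> 0 \<Longrightarrow> 0 \<le> t1 \<Longrightarrow> t1 \<le> t2 \<Longrightarrow> f t1 s \<le> f t2 s"
    and w_cont: "continuous_on {0..} w"
    and w_nonneg: "\<And>x. x \<ge> 0 \<Longrightarrow> w x \<ge> 0"
    and w_mono: "mono_on {0..} w"
    and w_pos: "\<And>x. x > 0 \<Longrightarrow> w x > 0"
    and \<alpha>_C1: "\<exists>\<alpha>'. continuous_on {0..} \<alpha>' \<and>
                 (\<forall>t\<ge>0. (\<alpha> has_real_derivative \<alpha>' t) (at t within {0..}))"
    and \<alpha>_nonneg: "\<And>t. t \<ge> 0 \<Longrightarrow> \<alpha> t \<ge> 0"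
    and \<alpha>_mono: "mono_on {0..} \<alpha>"
    and \<alpha>_le: "\<And>t. t \<ge> 0 \<Longrightarrow> \<alpha> t \<le> t"
    and u_cont: "continuous_on {0..} u"
    and u_nonneg: "\<And>t. t \<ge> 0 \<Longrightarrow> u t \<ge> 0"
    and ineq: "\<And>t. t \<ge> 0 \<Longrightarrow> u t powr n \<le> c + integral {0..\<alpha> t}
                 (\<lambda>s. f t s * (u s powr n + 1) * ln (u s powr n + 1) * w (u s))"
  shows "\<exists>\<tau>>0. \<forall>t\<in>{0..\<tau>}.
           Psi n w x0 (G x0 c) + integral {0..\<alpha> t} (\<lambda>s. f t s) \<in> Psi n w x0 ` {0<..} \<and>
           u t \<le> (Ginv x0 (Psi_inv n w x0 (Psi n w x0 (G x0 c) + integral {0..\<alpha> t} (\<lambda>s. f t s))))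
                    powr (1 / n)"
proof -
  obtain \<alpha>' where \<alpha>'_der: "\<And>t. t \<ge> 0 \<Longrightarrow> (\<alpha> has_real_derivative \<alpha>' t) (at t within {0..})"
    using \<alpha>_C1 by blast
  have \<alpha>0: "\<alpha> 0 = 0" using \<alpha>_nonneg[of 0] \<alpha>_le[of 0] by simp
  have fc: "continuous_on {0..} (f t)" if "t \<ge> 0" for t
  proof -
    have "continuous_on {0..} (\<lambda>s. (\<lambda>(t, s). f t s) (t, s))"
      by (rule continuous_on_compose2[OF f_cont continuous_on_Pair[OF continuous_on_const continuous_on_id]]) (use that in auto)
    thus ?thesis by simp
  qed
  define phi where "phi s = (u s powr n + 1) * ln (u s powr n + 1) * w (u s)" for s
  have phi_nonneg: "phi s \<ge> 0" if "s \<ge> 0" for s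
    unfolding phi_def using u_nonneg[OF that] w_nonneg[OF u_nonneg[OF that]] by simp
  have phi_cont: "continuous_on {0..} phi"
  proof -
    have c1: "continuous_on {0..} (\<lambda>s. u s powr n)"
      by (rule continuous_on_powr'[OF u_cont continuous_on_const]) (use u_nonneg n_pos in auto)
    have c2: "continuous_on {0..} (\<lambda>s. w (u s))"
      by (rule continuous_on_compose2[OF w_cont u_cont]) (use u_nonneg in auto)
    have c3: "continuous_on {0..} (\<lambda>s. ln (u s powr n + 1))"
    proof (rule continuous_on_ln[OF continuous_on_add[OF c1 continuous_on_const]], intro ballI)
      fix x :: real
      have "u x powr n \<ge> 0" by simp
      thus "u x powr n + 1 \<noteq> 0" by linarith
    qed
    show ?thesis unfolding phi_def
      by (rule continuous_on_mult[OF continuous_on_mult[OF continuous_on_add[OF c1 continuous_on_const] c3] c2])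
  qed
  have ineq': "u t powr n \<le> c + integral {0..\<alpha> t} (\<lambda>s. f t s * phi s)" if "t \<ge> 0" for t
    using ineq[OF that] by (simp add: phi_def mult.assoc)
  have L: "ln (x0+1) > 0" using x0 by simp
  have main: "Psi n w x0 (Gc x0 (c + integral {0..\<alpha> T} (\<lambda>s. f T s * phi s)))
      \<le> Psi n w x0 (Gc x0 c) + integral {0..\<alpha> T} (f T)" if T: "T \<ge> 0" for T
  proof -
    define g where "g s = f T s * phi s" for s
    define I where "I x = integral {0..x} g" for x
    define F where "F x = integral {0..x} (f T)" for x
    define z where "z t = c + I (\<alpha> t)" for t
    have gc: "continuous_on {0..} g" unfolding g_def by (rule continuous_on_mult[OF fc[OF T] phi_cont])
    have gnn: "g s \<ge> 0" if "s \<ge> 0" for s unfolding g_def using f_nonneg[OF T that] phi_nonneg[OF that] by simp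
    have Imono: "I a \<le> I b" if "0 \<le> a" "a \<le> b" for a b
      unfolding I_def
    proof (rule integral_subset_le)
      show "g integrable_on {0..a}"
        by (rule integrable_continuous_interval, rule continuous_on_subset[OF gc]) auto
      show "g integrable_on {0..b}"
        by (rule integrable_continuous_interval, rule continuous_on_subset[OF gc]) auto
    qed (use that gnn in auto)
    have I0: "I 0 = 0" unfolding I_def by simp
    have zc: "z t \<ge> c" if "t \<ge> 0" for t
      unfolding z_def using Imono[of 0 "\<alpha> t"] \<alpha>_nonneg[OF that] I0 by simp
    have \<alpha>in: "\<alpha> t \<in> {0..T}" if "t \<in> {0..T}" for t
      using \<alpha>_nonneg[of t] \<alpha>_le[of t] that by auto
    have da: "(\<alpha> has_real_derivative \<alpha>' t) (at t within {0..T})" if "t \<in> {0..T}" for t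
      by (rule DERIV_subset[OF \<alpha>'_der]) (use that in auto)
    have dI: "(I has_real_derivative g x) (at x within {0..T})" if "x \<in> {0..T}" for x
      unfolding I_def
      by (rule integral_has_real_derivative, rule continuous_on_subset[OF gc]) (use that in auto)
    have dF: "(F has_real_derivative f T x) (at x within {0..T})" if "x \<in> {0..T}" for x
      unfolding F_def
      by (rule integral_has_real_derivative, rule continuous_on_subset[OF fc[OF T]]) (use that in auto)
    have dIa: "((I \<circ> \<alpha>) has_real_derivative g (\<alpha> t) * \<alpha>' t) (at t within {0..T})" if "t \<in> {0..T}" for t
      by (rule DERIV_image_chain[OF DERIV_subset[OF dI[OF \<alpha>in[OF that]]] da[OF that]]) (use \<alpha>in in auto)
    have dFa: "((F \<circ> \<alpha>) has_real_derivative f T (\<alpha> t) * \<alpha>' t) (at t within {0..T})" if "t \<in> {0..T}" for t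
      by (rule DERIV_image_chain[OF DERIV_subset[OF dF[OF \<alpha>in[OF that]]] da[OF that]]) (use \<alpha>in in auto)
    have dz: "(z has_real_derivative g (\<alpha> t) * \<alpha>' t) (at t within {0..T})" if "t \<in> {0..T}" for t
    proof -
      have "((\<lambda>t. c + (I \<circ> \<alpha>) t) has_real_derivative 0 + g (\<alpha> t) * \<alpha>' t) (at t within {0..T})"
        by (rule DERIV_add[OF DERIV_const dIa[OF that]])
      thus ?thesis unfolding z_def by (simp add: o_def)
    qed
    define H where "H t = Psi n w x0 (Gc x0 (z t)) - F (\<alpha> t)" for t
    define D where "D t = hP n w x0 (Gc x0 (z t)) * (1 / ((z t + 1) * ln (z t + 1)) * (g (\<alpha> t) * \<alpha>' t))
       - f T (\<alpha> t) * \<alpha>' t" for t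
    have dH: "(H has_real_derivative D t) (at t within {0..T})" if t: "t \<in> {0..T}" for t
    proof -
      have zp: "z t > 0" using zc[of t] t c_pos by auto
      have gz: "Gc x0 (z t) > 0" using Gc_pos[OF x0(1), of "z t"] zc[of t] t x0 by auto
      have d1: "((\<lambda>t. Gc x0 (z t)) has_real_derivative 1 / ((z t + 1) * ln (z t + 1)) * (g (\<alpha> t) * \<alpha>' t)) (at t within {0..T})"
        by (rule DERIV_chain2[OF dGc[OF zp] dz[OF t]])
      have d2: "((\<lambda>t. Psi n w x0 (Gc x0 (z t))) has_real_derivative hP n w x0 (Gc x0 (z t)) * (1 / ((z t + 1) * ln (z t + 1)) * (g (\<alpha> t) * \<alpha>' t))) (at t within {0..T})"
        by (rule DERIV_chain2[OF Psi_deriv[OF x0(1) w_pos w_cont gz] d1])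
      have "((\<lambda>t. Psi n w x0 (Gc x0 (z t)) - (F \<circ> \<alpha>) t) has_real_derivative D t) (at t within {0..T})"
        unfolding D_def by (rule DERIV_diff[OF d2 dFa[OF t]])
      thus ?thesis unfolding H_def by (simp add: o_def)
    qed
    have Dle: "D t \<le> 0" if t: "0 < t" "t < T" for t
    proof -
      have t0: "t \<ge> 0" using t by simp
      have ap: "\<alpha>' t \<ge> 0"
      proof (rule ccontr)
        assume neg: "\<not> \<alpha>' t \<ge> 0"
        have "at t within {0..t+1} = at t" by (rule at_within_interior) (use t in simp)
        moreover have "(\<alpha> has_real_derivative \<alpha>' t) (at t within {0..t+1})"
          by (rule DERIV_subset[OF \<alpha>'_der[OF t0]]) auto
        ultimately have der: "DERIV \<alpha> t :> \<alpha>' t" by simp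
        have "\<alpha>' t < 0" using neg by simp
        from DERIV_neg_dec_right[OF der this] obtain d where d: "d > 0" "\<And>h. h > 0 \<Longrightarrow> h < d \<Longrightarrow> \<alpha> t > \<alpha> (t + h)"
          by blast
        have "\<alpha> t > \<alpha> (t + d/2)" using d by simp
        moreover have "\<alpha> t \<le> \<alpha> (t + d/2)"
          using \<alpha>_mono d t0 unfolding mono_on_def by simp
        ultimately show False by simp
      qed
      define a where "a = \<alpha> t"
      have a0: "a \<ge> 0" "a \<le> T" using \<alpha>in[of t] t unfolding a_def by auto
      have zt: "z t = c + I a" unfolding z_def a_def by simp
      have zp: "z t > 0" using zc[of t] t c_pos by auto
      define v where "v = u a powr n"
      have v0: "v \<ge> 0" unfolding v_def by simp
      have "v \<le> c + integral {0..\<alpha> a} (\<lambda>s. f a s * phi s)" unfolding v_def by (rule ineq'[OF a0(1)])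
      also have "\<dots> \<le> c + integral {0..\<alpha> a} g"
      proof -
        have sub: "{0..\<alpha> a} \<subseteq> {0..}" by auto
        have i1: "(\<lambda>s. f a s * phi s) integrable_on {0..\<alpha> a}"
          by (rule integrable_continuous_interval, rule continuous_on_mult;
              rule continuous_on_subset[OF _ sub]) (use fc[OF a0(1)] phi_cont in auto)
        have i2: "g integrable_on {0..\<alpha> a}"
          by (rule integrable_continuous_interval, rule continuous_on_subset[OF gc sub])
        have "integral {0..\<alpha> a} (\<lambda>s. f a s * phi s) \<le> integral {0..\<alpha> a} g"
        proof (rule integral_le[OF i1 i2])
          fix s assume "s \<in> {0..\<alpha> a}"
          hence s0: "s \<ge> 0" by simp
          show "f a s * phi s \<le> g s" unfolding g_def
            by (rule mult_right_mono[OF f_mono[OF s0 a0(1) a0(2)] phi_nonneg[OF s0]])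
        qed
        thus ?thesis by simp
      qed
      also have "\<dots> \<le> z t"
        using Imono[of "\<alpha> a" a] \<alpha>_nonneg[OF a0(1)] \<alpha>_le[OF a0(1)] zt unfolding I_def by simp
      finally have vz: "v \<le> z t" .
      have ua: "u a \<le> z t powr (1/n)"
      proof -
        have "u a = v powr (1/n)" unfolding v_def using n_pos u_nonneg[OF a0(1)] by (simp add: powr_powr)
        also have "\<dots> \<le> z t powr (1/n)" by (rule powr_mono2) (use n_pos v0 vz in auto)
        finally show ?thesis .
      qed
      define W where "W = w (z t powr (1/n))"
      define Q where "Q = (z t + 1) * ln (z t + 1)"
      have Wp: "W > 0" unfolding W_def using zp by (intro w_pos) simp
      have Qp: "Q > 0" unfolding Q_def using zp by simp
      have wle: "w (u a) \<le> W" unfolding W_def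
        using w_mono ua u_nonneg[OF a0(1)] unfolding mono_on_def by simp
      have qle: "(v + 1) * ln (v + 1) \<le> Q" unfolding Q_def
        by (rule mult_mono) (use vz v0 in auto)
      have "phi a \<le> Q * W" unfolding phi_def v_def[symmetric]
        by (rule mult_mono[OF qle wle]) (use Qp w_nonneg u_nonneg a0 in auto)
      hence "g a \<le> f T a * (Q * W)" unfolding g_def
        by (rule mult_left_mono) (use f_nonneg T a0 in auto)
      hence ga: "g a * \<alpha>' t \<le> f T a * (Q * W) * \<alpha>' t" by (rule mult_right_mono[OF _ ap])
      have hz: "hP n w x0 (Gc x0 (z t)) = 1 / W" unfolding W_def by (rule hP_Gc[OF x0(1) zp])
      have "D t = (g a * \<alpha>' t) / (W * Q) - f T a * \<alpha>' t"
        unfolding D_def hz a_def[symmetric] Q_def[symmetric] by simp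
      also have "\<dots> \<le> 0"
      proof -
        have eq: "f T a * (Q * W) * \<alpha>' t = f T a * \<alpha>' t * (W * Q)" by (simp only: mult_ac)
        have "(g a * \<alpha>' t) / (W * Q) \<le> f T a * \<alpha>' t"
          by (subst pos_divide_le_eq) (use Wp Qp ga eq in auto)
        thus ?thesis by linarith
      qed
      finally show ?thesis .
    qed
    have Hc: "continuous_on {0..T} H" by (rule DERIV_continuous_on[OF dH])
    have "H T \<le> H 0"
    proof (rule DERIV_nonpos_imp_decreasing_open[OF T _ Hc])
      fix t assume t: "0 < t" "t < T"
      have "at t within {0..T} = at t" by (rule at_within_interior) (use t in simp)
      hence "DERIV H t :> D t" using dH[of t] t by simp
      thus "\<exists>y. DERIV H t :> y \<and> y \<le> 0" using Dle[OF t] by blast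
    qed
    moreover have "H 0 = Psi n w x0 (Gc x0 c)" unfolding H_def z_def F_def I_def \<alpha>0 by simp
    ultimately show ?thesis unfolding H_def z_def I_def F_def g_def by simp
  qed
  define g0 where "g0 = Gc x0 c"
  have g0p: "g0 > 0" unfolding g0_def by (rule Gc_pos[OF x0])
  have Geq: "G x0 c = g0" unfolding g0_def by (rule G_eq) (use x0 in auto)
  define \<delta> where "\<delta> = Psi n w x0 (g0+1) - Psi n w x0 g0"
  have \<delta>p: "\<delta> > 0" unfolding \<delta>_def using Psi_strict[OF x0(1) w_pos w_cont g0p, of "g0+1" n] by simp
  have c1: "continuous_on {0..1} (f 1)" by (rule continuous_on_subset[OF fc]) auto
  obtain sm where sm: "sm \<in> {0..1}" "\<And>y. y \<in> {0..1} \<Longrightarrow> f 1 y \<le> f 1 sm"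
    using continuous_attains_sup[OF compact_Icc _ c1] by auto
  define M where "M = f 1 sm"
  have M0: "M \<ge> 0" unfolding M_def using f_nonneg sm(1) by simp
  define \<tau> where "\<tau> = min 1 (\<delta> / (M + 1))"
  have \<tau>p: "\<tau> > 0" unfolding \<tau>_def using \<delta>p M0 by simp
  have inj: "inj_on (Psi n w x0) {0<..}"
  proof (rule inj_onI)
    fix a b assume ab: "a \<in> {0<..}" "b \<in> {0<..}" "Psi n w x0 a = Psi n w x0 b"
    show "a = b"
    proof (rule ccontr)
      assume "a \<noteq> b"
      hence "a < b \<or> b < a" by linarith
      thus False using Psi_strict[OF x0(1) w_pos w_cont, of a b n] Psi_strict[OF x0(1) w_pos w_cont, of b a n] ab
        by auto
    qed
  qed
  show ?thesis
  proof (intro exI[of _ \<tau>] conjI ballI \<tau>p)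
    fix T assume "T \<in> {0..\<tau>}"
    hence T0: "T \<ge> 0" "T \<le> 1" "T \<le> \<delta> / (M + 1)" unfolding \<tau>_def by auto
    have aT: "0 \<le> \<alpha> T" "\<alpha> T \<le> T" using \<alpha>_nonneg[OF T0(1)] \<alpha>_le[OF T0(1)] by auto
    define S where "S = integral {0..\<alpha> T} (\<lambda>s. f T s)"
    have iT: "(\<lambda>s. f T s) integrable_on {0..\<alpha> T}"
      by (rule integrable_continuous_interval, rule continuous_on_subset[OF fc[OF T0(1)]]) auto
    have S0: "S \<ge> 0" unfolding S_def by (rule integral_nonneg[OF iT]) (use f_nonneg T0 in auto)
    have "S \<le> integral {0..\<alpha> T} (\<lambda>s. M)" unfolding S_def
    proof (rule integral_le[OF iT])
      show "(\<lambda>s. M) integrable_on {0..\<alpha> T}" by (rule integrable_continuous_interval[OF continuous_on_const])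
      fix s assume s: "s \<in> {0..\<alpha> T}"
      hence "s \<in> {0..1}" using aT T0 by auto
      hence "f 1 s \<le> M" unfolding M_def by (rule sm(2))
      moreover have "f T s \<le> f 1 s" by (rule f_mono) (use s T0 in auto)
      ultimately show "f T s \<le> M" by simp
    qed
    also have "\<dots> = M * \<alpha> T" using aT by simp
    also have "\<dots> \<le> M * (\<delta> / (M + 1))"
      by (rule mult_left_mono) (use aT T0 M0 in auto)
    also have "\<dots> < \<delta>" using M0 \<delta>p by (simp add: field_simps)
    finally have S\<delta>: "S < \<delta>" .
    define y where "y = Psi n w x0 g0 + S"
    have "\<exists>x\<ge>g0. x \<le> g0 + 1 \<and> Psi n w x0 x = y"
      by (rule IVT') (use S0 S\<delta> Psi_cont[OF x0(1) w_pos w_cont g0p] in \<open>auto simp: y_def \<delta>_def\<close>)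
    then obtain x where x: "g0 \<le> x" "x \<le> g0 + 1" "Psi n w x0 x = y" by blast
    have xp: "x > 0" using x g0p by simp
    have Pinv: "Psi_inv n w x0 y = x"
      unfolding Psi_inv_def x(3)[symmetric] by (rule the_inv_into_f_f[OF inj]) (use xp in simp)
    show "Psi n w x0 (G x0 c) + integral {0..\<alpha> T} (\<lambda>s. f T s) \<in> Psi n w x0 ` {0<..}"
      unfolding Geq S_def[symmetric] y_def[symmetric] x(3)[symmetric] using xp by simp
    define zT where "zT = c + integral {0..\<alpha> T} (\<lambda>s. f T s * phi s)"
    have "integral {0..\<alpha> T} (\<lambda>s. f T s * phi s) \<ge> 0"
    proof (rule integral_nonneg)
      show "(\<lambda>s. f T s * phi s) integrable_on {0..\<alpha> T}"
        by (rule integrable_continuous_interval, rule continuous_on_subset[OF continuous_on_mult[OF fc[OF T0(1)] phi_cont]]) auto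
    qed (use f_nonneg phi_nonneg T0 in simp)
    hence zc: "zT \<ge> c" unfolding zT_def by simp
    have zp: "zT > 0" using zc c_pos by simp
    have m: "Psi n w x0 (Gc x0 zT) \<le> y"
      using main[OF T0(1)] unfolding zT_def y_def S_def g0_def by simp
    have Gz: "Gc x0 zT \<le> x"
    proof (rule ccontr)
      assume "\<not> Gc x0 zT \<le> x"
      hence "Psi n w x0 x < Psi n w x0 (Gc x0 zT)"
        using Psi_strict[OF x0(1) w_pos w_cont xp, of "Gc x0 zT" n] by simp
      thus False using m x(3) by simp
    qed
    have zG: "zT \<le> Ginv x0 x"
      using Ginv_mono[OF x0(1) Gz] Ginv_Gc[OF x0(1) zp] by simp
    have uz: "u T powr n \<le> zT" unfolding zT_def by (rule ineq'[OF T0(1)])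
    have "u T = (u T powr n) powr (1/n)" using n_pos u_nonneg[OF T0(1)] by (simp add: powr_powr)
    also have "\<dots> \<le> zT powr (1/n)" by (rule powr_mono2) (use n_pos uz in auto)
    also have "\<dots> \<le> (Ginv x0 x) powr (1/n)" by (rule powr_mono2) (use n_pos zp zG in auto)
    finally show "u T \<le> (Ginv x0 (Psi_inv n w x0 (Psi n w x0 (G x0 c) + integral {0..\<alpha> T} (\<lambda>s. f T s)))) powr (1 / n)"
      unfolding Geq S_def[symmetric] y_def[symmetric] Pinv .
  qed
qed

end
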